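(* For every precubical set $X$, the stream realization $\vec{|X|}$ is vortex-free, i.e. every point $x\in\vec{|X|}$ has an open neighborhood $V$ for which the preorder $\leqslant_V$ is antisymmetric.
   Context: A circulation on a topological space $X$ is a function assigning to each open $V\subset X$ a preorder $\leqslant_V$ on $V$ such that for every collection $\mathcal{O}$ of open subsets, $\leqslant_{\bigcup\mathcal{O}}$ is the preorder on $\bigcup\mathcal{O}$ with smallest graph containing $\bigcup_{V\in\mathcal{O}}\mathrm{graph}(\leqslant_V)$. A stream is a space with a circulation; a stream map $f:X\to Y$ is a continuous map with $f(x)\leqslant_V f(y)$ whenever $x\leqslant_{f^{-1}V}y$, for every open $V\subset Y$. The category of streams is cocomplete, colimits being computed on underlying spaces with the final circulation. A vortex of a stream is a point $x$ such that $\leqslant_V$ fails to be antisymmetric for every open neighborhood $V$ of $x$; a stream is vortex-free if it has no vortices. Precubical sets: let $\square$ be the smallest subcategory of posets and monotone maps closed under cartesian products (unit $[0]=\{0\}$) containing $\delta_-,\delta_+:[0]\to[1]=\{0<1\}$ (sending $0$ to $0$, resp. $1$); its objects are the $[1]^n$. A precubical set is a functor $X:\square^{op}\to\mathbf{Set}$, $X_n=X([1]^n)$. Let $\vec\square[1]$ be $[0,1]$ with circulation $x\leqslant_V y$ iff $x\le y$ and $[x,y]\subset V$, and $\vec\square[n]$ its $n$-fold product in streams; $\square$-morphisms extend linearly to stream maps between these. The stream realization is the coend $\vec{|X|}=\int^{[1]^n\in\square}X_n\cdot\vec\square[n]$ in streams, with underlying space the geometric realization $|X|$. *)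

theory Defs
  imports "HOL-Analysis.Analysis"
begin

text \<open>A circulation on a topological space T is encoded as a function C assigning
to every set a relation; on open sets V it is a preorder on V, on non-open sets
it is the empty relation (normalisation, so that a circulation is determined by
its values on open sets).\<close>

definition is_circulation :: "'a topology \<Rightarrow> ('a set \<Rightarrow> ('a \<times> 'a) set) \<Rightarrow> bool" where
  "is_circulation T C \<longleftrightarrow>
     (\<forall>V. \<not> openin T V \<longrightarrow> C V = {}) \<and>
     (\<forall>V. openin T V \<longrightarrow> C V \<subseteq> V \<times> V \<and> refl_on V (C V) \<and> trans (C V)) \<and>
     (\<forall>Os. (\<forall>V\<in>Os. openin T V) \<longrightarrow>
          C (\<Union>Os) = Id_on (\<Union>Os) \<union> (\<Union>V\<in>Os. C V)\<^sup>+)"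

definition stream_map ::
  "'a topology \<Rightarrow> ('a set \<Rightarrow> ('a \<times> 'a) set) \<Rightarrow>
   'b topology \<Rightarrow> ('b set \<Rightarrow> ('b \<times> 'b) set) \<Rightarrow> ('a \<Rightarrow> 'b) \<Rightarrow> bool" where
  "stream_map T C S D f \<longleftrightarrow> continuous_map T S f \<and>
     (\<forall>V. openin S V \<longrightarrow>
        (\<forall>x y. (x, y) \<in> C {z \<in> topspace T. f z \<in> V} \<longrightarrow> (f x, f y) \<in> D V))"

definition vortex :: "'a topology \<Rightarrow> ('a set \<Rightarrow> ('a \<times> 'a) set) \<Rightarrow> 'a \<Rightarrow> bool" where
  "vortex T C x \<longleftrightarrow> x \<in> topspace T \<and>
     (\<forall>V. openin T V \<and> x \<in> V \<longrightarrow> \<not> antisym (C V))"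

definition vortex_free :: "'a topology \<Rightarrow> ('a set \<Rightarrow> ('a \<times> 'a) set) \<Rightarrow> bool" where
  "vortex_free T C \<longleftrightarrow> (\<forall>x\<in>topspace T. \<not> vortex T C x)"

definition interval_top :: "real topology" where
  "interval_top = top_of_set {0..1}"

definition interval_circ :: "real set \<Rightarrow> (real \<times> real) set" where
  "interval_circ V = (if openin interval_top V then {(x, y). x \<le> y \<and> {x..y} \<subseteq> V} else {})"

text \<open>[0,1]^n, encoded as functions nat => real vanishing from index n on,
with the (product) topology.\<close>

definition cube :: "nat \<Rightarrow> (nat \<Rightarrow> real) set" where
  "cube n = {t. (\<forall>i<n. 0 \<le> t i \<and> t i \<le> 1) \<and> (\<forall>i\<ge>n. t i = 0)}"

definition cube_top :: "nat \<Rightarrow> (nat \<Rightarrow> real) topology" where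
  "cube_top n = top_of_set (cube n)"

text \<open>The n-fold product of the directed interval in the category of streams:
the product topology with the initial circulation w.r.t. the projections, i.e.
the greatest circulation making all projections stream maps.\<close>

definition cube_circ :: "nat \<Rightarrow> (nat \<Rightarrow> real) set \<Rightarrow> ((nat \<Rightarrow> real) \<times> (nat \<Rightarrow> real)) set" where
  "cube_circ n = (THE C. is_circulation (cube_top n) C \<and>
      (\<forall>i<n. stream_map (cube_top n) C interval_top interval_circ (\<lambda>t. t i)) \<and>
      (\<forall>C'. is_circulation (cube_top n) C' \<and>
            (\<forall>i<n. stream_map (cube_top n) C' interval_top interval_circ (\<lambda>t. t i))
            \<longrightarrow> (\<forall>V. C' V \<subseteq> C V)))"

text \<open>A precubical set is given by its set of cubes X (of some type 'c), a
dimension function and face maps d i k : X_n -> X_(n-1) (i < n, coordinates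
counted from 0, k = False for delta_minus and k = True for delta_plus),
satisfying the precubical identities; this is the usual presentation of
functors from the box category (generated by the coface maps) to Set.\<close>

definition precubical :: "'c set \<Rightarrow> ('c \<Rightarrow> nat) \<Rightarrow> (nat \<Rightarrow> bool \<Rightarrow> 'c \<Rightarrow> 'c) \<Rightarrow> bool" where
  "precubical X dm d \<longleftrightarrow>
     (\<forall>c\<in>X. \<forall>i<dm c. \<forall>k. d i k c \<in> X \<and> dm (d i k c) = dm c - 1) \<and>
     (\<forall>c\<in>X. \<forall>i j k l. i < j \<and> j < dm c \<longrightarrow> d i k (d j l c) = d (j - 1) l (d i k c))"

definition coface :: "nat \<Rightarrow> bool \<Rightarrow> (nat \<Rightarrow> real) \<Rightarrow> (nat \<Rightarrow> real)" where
  "coface i k t = (\<lambda>j. if j < i then t j else if j = i then (if k then 1 else 0) else t (j - 1))"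

definition real_pts :: "'c set \<Rightarrow> ('c \<Rightarrow> nat) \<Rightarrow> ('c \<times> (nat \<Rightarrow> real)) set" where
  "real_pts X dm = {(c, t). c \<in> X \<and> t \<in> cube (dm c)}"

definition real_gen ::
  "'c set \<Rightarrow> ('c \<Rightarrow> nat) \<Rightarrow> (nat \<Rightarrow> bool \<Rightarrow> 'c \<Rightarrow> 'c) \<Rightarrow> (('c \<times> (nat \<Rightarrow> real)) \<times> ('c \<times> (nat \<Rightarrow> real))) set" where
  "real_gen X dm d = {((d i k c, t), (c, coface i k t)) | c i k t.
      c \<in> X \<and> i < dm c \<and> t \<in> cube (dm c - 1)}"

definition real_equiv ::
  "'c set \<Rightarrow> ('c \<Rightarrow> nat) \<Rightarrow> (nat \<Rightarrow> bool \<Rightarrow> 'c \<Rightarrow> 'c) \<Rightarrow> (('c \<times> (nat \<Rightarrow> real)) \<times> ('c \<times> (nat \<Rightarrow> real))) set" where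
  "real_equiv X dm d = Id_on (real_pts X dm) \<union> (real_gen X dm d \<union> (real_gen X dm d)\<inverse>)\<^sup>+"

definition real_space :: "'c set \<Rightarrow> ('c \<Rightarrow> nat) \<Rightarrow> (nat \<Rightarrow> bool \<Rightarrow> 'c \<Rightarrow> 'c) \<Rightarrow> ('c \<times> (nat \<Rightarrow> real)) set set" where
  "real_space X dm d = real_pts X dm // real_equiv X dm d"

definition real_map ::
  "'c set \<Rightarrow> ('c \<Rightarrow> nat) \<Rightarrow> (nat \<Rightarrow> bool \<Rightarrow> 'c \<Rightarrow> 'c) \<Rightarrow> 'c \<Rightarrow> (nat \<Rightarrow> real) \<Rightarrow> ('c \<times> (nat \<Rightarrow> real)) set" where
  "real_map X dm d c t = real_equiv X dm d `` {(c, t)}"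

definition real_top :: "'c set \<Rightarrow> ('c \<Rightarrow> nat) \<Rightarrow> (nat \<Rightarrow> bool \<Rightarrow> 'c \<Rightarrow> 'c) \<Rightarrow> ('c \<times> (nat \<Rightarrow> real)) set topology" where
  "real_top X dm d = topology (\<lambda>U. U \<subseteq> real_space X dm d \<and>
      (\<forall>c\<in>X. openin (cube_top (dm c)) {t \<in> cube (dm c). real_map X dm d c t \<in> U}))"

definition real_circ ::
  "'c set \<Rightarrow> ('c \<Rightarrow> nat) \<Rightarrow> (nat \<Rightarrow> bool \<Rightarrow> 'c \<Rightarrow> 'c) \<Rightarrow>
   ('c \<times> (nat \<Rightarrow> real)) set set \<Rightarrow> (('c \<times> (nat \<Rightarrow> real)) set \<times> ('c \<times> (nat \<Rightarrow> real)) set) set" where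
  "real_circ X dm d = (THE C. is_circulation (real_top X dm d) C \<and>
      (\<forall>c\<in>X. stream_map (cube_top (dm c)) (cube_circ (dm c)) (real_top X dm d) C (real_map X dm d c)) \<and>
      (\<forall>C'. is_circulation (real_top X dm d) C' \<and>
            (\<forall>c\<in>X. stream_map (cube_top (dm c)) (cube_circ (dm c)) (real_top X dm d) C' (real_map X dm d c))
            \<longrightarrow> (\<forall>V. C V \<subseteq> C' V)))"

end

theory Submission
  imports Defs
begin


lemma circ_cosheaf: "is_circulation T C \<Longrightarrow> (\<forall>V\<in>Os. openin T V) \<Longrightarrow>
   C (\<Union>Os) = Id_on (\<Union>Os) \<union> (\<Union>V\<in>Os. C V)\<^sup>+"
  unfolding is_circulation_def by (drule conjunct2, drule conjunct2, erule allE, erule mp)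

lemma circ_nonopen: "is_circulation T C \<Longrightarrow> \<not> openin T V \<Longrightarrow> C V = {}"
  unfolding is_circulation_def by (drule conjunct1, erule allE, erule mp)

lemma circ_open: "is_circulation T C \<Longrightarrow> openin T V \<Longrightarrow> C V \<subseteq> V \<times> V \<and> refl_on V (C V) \<and> trans (C V)"
  unfolding is_circulation_def by (drule conjunct2, drule conjunct1, erule allE, erule mp)

lemma circ_intro:
  assumes "\<And>V. \<not> openin T V \<Longrightarrow> C V = {}"
    "\<And>V. openin T V \<Longrightarrow> C V \<subseteq> V \<times> V \<and> refl_on V (C V) \<and> trans (C V)"
    "\<And>Os. \<forall>V\<in>Os. openin T V \<Longrightarrow> C (\<Union>Os) = Id_on (\<Union>Os) \<union> (\<Union>V\<in>Os. C V)\<^sup>+"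
  shows "is_circulation T C"
  unfolding is_circulation_def using assms by (intro conjI allI impI) auto

lemma circ_opendom: "is_circulation T C \<Longrightarrow> (x,y) \<in> C V \<Longrightarrow> openin T V"
  using circ_nonopen by fastforce

lemma circ_sub: "is_circulation T C \<Longrightarrow> C V \<subseteq> V \<times> V"
  by (metis circ_nonopen circ_open empty_subsetI)

lemma circ_refl: "is_circulation T C \<Longrightarrow> openin T V \<Longrightarrow> x \<in> V \<Longrightarrow> (x,x) \<in> C V"
  by (meson circ_open refl_onD)

lemma circ_trans: "is_circulation T C \<Longrightarrow> trans (C V)"
proof (cases "openin T V")
  case False assume a: "is_circulation T C" show ?thesis using circ_nonopen[OF a False] by (simp add: trans_def)
qed (use circ_open in blast)

lemma circ_mono:
  assumes "is_circulation T C" "openin T U" "openin T U'" "U \<subseteq> U'"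
  shows "C U \<subseteq> C U'"
proof -
  have e: "C (\<Union>{U,U'}) = Id_on (\<Union>{U,U'}) \<union> (\<Union>V\<in>{U,U'}. C V)\<^sup>+"
    using assms(2,3) by (intro circ_cosheaf[OF assms(1)]) simp
  have "\<Union>{U,U'} = U'" using assms(4) by blast
  hence e2: "C U' = Id_on U' \<union> (\<Union>V\<in>{U,U'}. C V)\<^sup>+" using e by simp
  have "C U \<subseteq> (\<Union>V\<in>{U,U'}. C V)" by blast
  also have "\<dots> \<subseteq> (\<Union>V\<in>{U,U'}. C V)\<^sup>+" by (meson r_into_trancl' subsetI)
  also have "\<dots> \<subseteq> C U'" using e2 by blast
  finally show ?thesis .
qed

lemma trans_Id_trancl: "trans (Id_on A \<union> R\<^sup>+)"
proof (rule transI)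
  fix x y z assume "(x,y) \<in> Id_on A \<union> R\<^sup>+" "(y,z) \<in> Id_on A \<union> R\<^sup>+"
  thus "(x,z) \<in> Id_on A \<union> R\<^sup>+" by (auto dest: trancl_trans)
qed

lemma trancl_into_trans:
  assumes "R \<subseteq> S" "trans S" shows "R\<^sup>+ \<subseteq> S"
proof
  fix p assume "p \<in> R\<^sup>+" then obtain x y where p: "p = (x,y)" "(x,y) \<in> R\<^sup>+" by (cases p) auto
  from p(2) have "(x,y) \<in> S"
    by (induction rule: trancl_induct) (use assms in \<open>auto dest: transD\<close>)
  thus "p \<in> S" using p by simp
qed



definition cons_cube :: "nat \<Rightarrow> ((nat \<Rightarrow> real) set \<Rightarrow> ((nat \<Rightarrow> real) \<times> (nat \<Rightarrow> real)) set) \<Rightarrow> bool" where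
  "cons_cube n C = (\<forall>i<n. stream_map (cube_top n) C interval_top interval_circ (\<lambda>t. t i))"

definition GC :: "nat \<Rightarrow> (nat \<Rightarrow> real) set \<Rightarrow> ((nat \<Rightarrow> real) \<times> (nat \<Rightarrow> real)) set" where
  "GC n V = (if openin (cube_top n) V then
      Id_on V \<union> (\<Union>C\<in>{C. is_circulation (cube_top n) C \<and> cons_cube n C}. C V)\<^sup>+ else {})"

lemma proj_cont: "i < n \<Longrightarrow> continuous_map (cube_top n) interval_top (\<lambda>t. t i)"
  unfolding cube_top_def interval_top_def continuous_map_subtopology_eu
proof
  show "continuous_on (cube n) (\<lambda>t. t i)"
    by (rule continuous_on_subset[OF continuous_on_product_coordinates]) simp
  assume "i < n" thus "(\<lambda>t. t i) \<in> cube n \<rightarrow> {0..1}" by (auto simp: cube_def)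
qed

lemma interval_circ_trans: "trans (interval_circ W)"
proof (rule transI)
  fix x y z assume "(x,y) \<in> interval_circ W" "(y,z) \<in> interval_circ W"
  hence "openin interval_top W" "x \<le> y" "{x..y} \<subseteq> W" "y \<le> z" "{y..z} \<subseteq> W"
    by (auto simp: interval_circ_def split: if_splits)
  moreover have "{x..z} \<subseteq> {x..y} \<union> {y..z}" by auto
  ultimately show "(x,z) \<in> interval_circ W" by (auto simp: interval_circ_def)
qed

lemma topspace_cube: "topspace (cube_top n) = cube n"
  by (simp add: cube_top_def)

lemma cons_cubeD:
  "cons_cube n C \<Longrightarrow> i < n \<Longrightarrow> openin interval_top W \<Longrightarrow>
   (x, y) \<in> C {z \<in> topspace (cube_top n). z i \<in> W} \<Longrightarrow> (x i, y i) \<in> interval_circ W"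
  unfolding cons_cube_def stream_map_def by blast

lemma GC_circ: "is_circulation (cube_top n) (GC n)"
proof -
  let ?S = "{C. is_circulation (cube_top n) C \<and> cons_cube n C}"
  have sub: "GC n V \<subseteq> V \<times> V" for V
  proof (cases "openin (cube_top n) V")
    case True
    have "(\<Union>C\<in>?S. C V) \<subseteq> V \<times> V"
    proof
      fix p assume "p \<in> (\<Union>C\<in>?S. C V)"
      then obtain C where "is_circulation (cube_top n) C" "p \<in> C V" by blast
      thus "p \<in> V \<times> V" using circ_sub[of "cube_top n" C V] by blast
    qed
    hence "(\<Union>C\<in>?S. C V)\<^sup>+ \<subseteq> V \<times> V" by (rule trancl_subset_Sigma)
    moreover have "Id_on V \<subseteq> V \<times> V" by (rule Id_on_subset_Times)
    ultimately show ?thesis using True unfolding GC_def by simp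
  qed (simp add: GC_def)
  have mono: "GC n V \<subseteq> GC n U" if "openin (cube_top n) V" "openin (cube_top n) U" "V \<subseteq> U" for U V
  proof -
    have "(\<Union>C\<in>?S. C V) \<subseteq> (\<Union>C\<in>?S. C U)" using circ_mono that by blast
    hence "(\<Union>C\<in>?S. C V)\<^sup>+ \<subseteq> (\<Union>C\<in>?S. C U)\<^sup>+" by (rule trancl_mono_subset)
    moreover have "Id_on V \<subseteq> Id_on U" using that(3) by blast
    ultimately show ?thesis using that unfolding GC_def by (simp only: if_True) blast
  qed
  show ?thesis
  proof (rule circ_intro)
    fix V assume "\<not> openin (cube_top n) V" thus "GC n V = {}" by (simp add: GC_def)
  next
    fix V assume V: "openin (cube_top n) V"
    have "refl_on V (GC n V)" using V sub[of V] unfolding refl_on_def by (simp add: GC_def Id_on_iff)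
    moreover have "trans (GC n V)" using V trans_Id_trancl by (simp add: GC_def)
    ultimately show "GC n V \<subseteq> V \<times> V \<and> refl_on V (GC n V) \<and> trans (GC n V)" using sub by blast
  next
    fix Os assume op: "\<forall>V\<in>Os. openin (cube_top n) V"
    hence opU: "openin (cube_top n) (\<Union>Os)" by auto
    show "GC n (\<Union>Os) = Id_on (\<Union>Os) \<union> (\<Union>V\<in>Os. GC n V)\<^sup>+"
    proof
      have "(\<Union>C\<in>?S. C (\<Union>Os)) \<subseteq> Id_on (\<Union>Os) \<union> (\<Union>V\<in>Os. GC n V)\<^sup>+"
      proof
        fix p assume "p \<in> (\<Union>C\<in>?S. C (\<Union>Os))"
        then obtain C where C: "C \<in> ?S" "p \<in> C (\<Union>Os)" by blast
        have "C (\<Union>Os) = Id_on (\<Union>Os) \<union> (\<Union>V\<in>Os. C V)\<^sup>+"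
          using C(1) op by (intro circ_cosheaf) auto
        hence "p \<in> Id_on (\<Union>Os) \<union> (\<Union>V\<in>Os. C V)\<^sup>+" using C(2) by simp
        moreover have "(\<Union>V\<in>Os. C V) \<subseteq> (\<Union>V\<in>Os. GC n V)"
        proof
          fix q assume "q \<in> (\<Union>V\<in>Os. C V)"
          then obtain V where "V \<in> Os" "q \<in> C V" by blast
          have "openin (cube_top n) V" using op \<open>V \<in> Os\<close> by blast
          have "q \<in> (\<Union>C\<in>?S. C V)" using C(1) \<open>q \<in> C V\<close> by blast
          hence "q \<in> (\<Union>C\<in>?S. C V)\<^sup>+" by (rule r_into_trancl')
          hence "q \<in> GC n V" using \<open>openin (cube_top n) V\<close> unfolding GC_def by simp
          thus "q \<in> (\<Union>V\<in>Os. GC n V)" using \<open>V \<in> Os\<close> by blast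
        qed
        hence "(\<Union>V\<in>Os. C V)\<^sup>+ \<subseteq> (\<Union>V\<in>Os. GC n V)\<^sup>+" by (rule trancl_mono_subset)
        ultimately show "p \<in> Id_on (\<Union>Os) \<union> (\<Union>V\<in>Os. GC n V)\<^sup>+" by blast
      qed
      hence "(\<Union>C\<in>?S. C (\<Union>Os))\<^sup>+ \<subseteq> Id_on (\<Union>Os) \<union> (\<Union>V\<in>Os. GC n V)\<^sup>+"
        using trans_Id_trancl by (rule trancl_into_trans)
      moreover have "Id_on (\<Union>Os) \<subseteq> Id_on (\<Union>Os) \<union> (\<Union>V\<in>Os. GC n V)\<^sup>+" by blast
      ultimately show "GC n (\<Union>Os) \<subseteq> Id_on (\<Union>Os) \<union> (\<Union>V\<in>Os. GC n V)\<^sup>+"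
        using opU unfolding GC_def by simp
    next
      have "(\<Union>V\<in>Os. GC n V) \<subseteq> GC n (\<Union>Os)" using mono op opU by blast
      moreover have "trans (GC n (\<Union>Os))" using opU trans_Id_trancl by (simp add: GC_def)
      ultimately have "(\<Union>V\<in>Os. GC n V)\<^sup>+ \<subseteq> GC n (\<Union>Os)" by (rule trancl_into_trans)
      moreover have "Id_on (\<Union>Os) \<subseteq> GC n (\<Union>Os)" using opU by (simp add: GC_def)
      ultimately show "Id_on (\<Union>Os) \<union> (\<Union>V\<in>Os. GC n V)\<^sup>+ \<subseteq> GC n (\<Union>Os)" by blast
    qed
  qed
qed

lemma GC_cons: "cons_cube n (GC n)"
  unfolding cons_cube_def stream_map_def
proof (intro allI impI conjI)
  fix i assume i: "i < n"
  show "continuous_map (cube_top n) interval_top (\<lambda>t. t i)" using proj_cont i .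
  fix W x y assume W: "openin interval_top W"
    and xy: "(x, y) \<in> GC n {z \<in> topspace (cube_top n). z i \<in> W}"
  let ?U = "{z \<in> topspace (cube_top n). z i \<in> W}"
  let ?S = "{C. is_circulation (cube_top n) C \<and> cons_cube n C}"
  have opU: "openin (cube_top n) ?U" using proj_cont[OF i] W by (simp add: continuous_map_def)
  have "(x,y) \<in> Id_on ?U \<union> (\<Union>C\<in>?S. C ?U)\<^sup>+" using xy opU by (simp add: GC_def)
  thus "(x i, y i) \<in> interval_circ W"
  proof
    assume "(x,y) \<in> Id_on ?U" thus ?thesis using W by (auto simp: interval_circ_def)
  next
    assume "(x,y) \<in> (\<Union>C\<in>?S. C ?U)\<^sup>+"
    thus ?thesis
    proof (induction rule: trancl_induct)
      case (base y)
      then obtain C where "C \<in> ?S" "(x,y) \<in> C ?U" by blast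
      thus ?case using W i cons_cubeD by blast
    next
      case (step y z)
      then obtain C where "C \<in> ?S" "(y,z) \<in> C ?U" by blast
      hence "(y i, z i) \<in> interval_circ W" using W i cons_cubeD by blast
      thus ?case using step.IH interval_circ_trans by (meson transE)
    qed
  qed
qed

lemma GC_greatest: "is_circulation (cube_top n) C \<Longrightarrow> cons_cube n C \<Longrightarrow> C V \<subseteq> GC n V"
proof (cases "openin (cube_top n) V")
  case True
  assume "is_circulation (cube_top n) C" "cons_cube n C"
  hence "C V \<subseteq> (\<Union>C\<in>{C. is_circulation (cube_top n) C \<and> cons_cube n C}. C V)" by blast
  also have "\<dots> \<subseteq> (\<Union>C\<in>{C. is_circulation (cube_top n) C \<and> cons_cube n C}. C V)\<^sup>+"
    by (meson r_into_trancl' subsetI)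
  finally have h: "C V \<subseteq> (\<Union>C\<in>{C. is_circulation (cube_top n) C \<and> cons_cube n C}. C V)\<^sup>+" .
  show ?thesis unfolding GC_def if_P[OF True] using h by (rule le_supI2)
next
  case False
  assume "is_circulation (cube_top n) C" thus ?thesis using circ_nonopen False by blast
qed

lemma cube_circ_eq: "cube_circ n = GC n"
  unfolding cube_circ_def cons_cube_def[symmetric]
proof (rule the_equality)
  show "is_circulation (cube_top n) (GC n) \<and> cons_cube n (GC n) \<and>
    (\<forall>C'. is_circulation (cube_top n) C' \<and> cons_cube n C' \<longrightarrow> (\<forall>V. C' V \<subseteq> GC n V))"
    using GC_circ GC_cons GC_greatest by blast
next
  fix C assume C: "is_circulation (cube_top n) C \<and> cons_cube n C \<and>
    (\<forall>C'. is_circulation (cube_top n) C' \<and> cons_cube n C' \<longrightarrow> (\<forall>V. C' V \<subseteq> C V))"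
  show "C = GC n"
  proof
    fix V
    have "C V \<subseteq> GC n V" using C GC_greatest by blast
    moreover have "GC n V \<subseteq> C V" using C GC_circ GC_cons by blast
    ultimately show "C V = GC n V" by (rule subset_antisym)
  qed
qed

lemma cube_circ_circ: "is_circulation (cube_top n) (cube_circ n)"
  by (simp add: cube_circ_eq GC_circ)

lemma cube_circ_cons: "cons_cube n (cube_circ n)"
  by (simp add: cube_circ_eq GC_cons)

lemma cube_circ_le: "(x,y) \<in> cube_circ n U \<Longrightarrow> i < n \<Longrightarrow> x i \<le> y i"
proof -
  assume xy: "(x,y) \<in> cube_circ n U" and i: "i < n"
  have opU: "openin (cube_top n) U" by (rule circ_opendom[OF cube_circ_circ xy])
  have "U \<subseteq> cube n" using openin_subset[OF opU] by (simp add: topspace_cube)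
  have e: "{z \<in> topspace (cube_top n). z i \<in> {0..1}} = cube n"
    using i by (auto simp: topspace_cube cube_def)
  have "openin (cube_top n) (cube n)" by (metis openin_topspace topspace_cube)
  hence "cube_circ n U \<subseteq> cube_circ n (cube n)" using circ_mono[OF cube_circ_circ opU] \<open>U \<subseteq> cube n\<close> by simp
  hence "(x,y) \<in> cube_circ n (cube n)" using xy by (rule subsetD)
  moreover have "openin interval_top {0..1}" by (metis interval_top_def openin_topspace topspace_euclidean_subtopology)
  ultimately have "(x i, y i) \<in> interval_circ {0..1}"
    using cons_cubeD[OF cube_circ_cons i, of "{0..1}" x y] e by simp
  thus ?thesis by (auto simp: interval_circ_def split: if_splits)
qed

lemma cube_circ_sub: "(x,y) \<in> cube_circ n U \<Longrightarrow> x \<in> U \<and> y \<in> U"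
  using circ_sub[OF cube_circ_circ, of n U] by blast



lemma trancl_map:
  assumes "(x,y) \<in> A\<^sup>+" "\<And>a b. (a,b) \<in> A \<Longrightarrow> (g a, g b) \<in> B"
  shows "(g x, g y) \<in> B\<^sup>+"
  using assms(1)
proof (induction rule: trancl_induct)
  case (base y) thus ?case using assms(2) by (meson r_into_trancl')
next
  case (step y z) thus ?case using assms(2) by (meson trancl.trancl_into_trancl)
qed

locale rz = fixes X :: "'c set" and dm :: "'c \<Rightarrow> nat" and d :: "nat \<Rightarrow> bool \<Rightarrow> 'c \<Rightarrow> 'c"
begin

abbreviation "RT \<equiv> real_top X dm d"
abbreviation "RS \<equiv> real_space X dm d"
abbreviation "fm \<equiv> real_map X dm d"
abbreviation "RE \<equiv> real_equiv X dm d"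

definition ropen where
  "ropen U \<longleftrightarrow> U \<subseteq> RS \<and> (\<forall>c\<in>X. openin (cube_top (dm c)) {t \<in> cube (dm c). fm c t \<in> U})"

lemma istop: "istopology ropen"
  unfolding istopology_def
proof (intro conjI allI impI)
  fix S T assume "ropen S" "ropen T"
  moreover have "{t \<in> cube (dm c). fm c t \<in> S \<inter> T} =
     {t \<in> cube (dm c). fm c t \<in> S} \<inter> {t \<in> cube (dm c). fm c t \<in> T}" for c by blast
  ultimately show "ropen (S \<inter> T)" unfolding ropen_def by (simp add: le_infI1 openin_Int)
next
  fix K assume K: "\<forall>S\<in>K. ropen S"
  have e: "{t \<in> cube (dm c). fm c t \<in> \<Union>K} = \<Union>((\<lambda>S. {t \<in> cube (dm c). fm c t \<in> S}) ` K)" for c by blast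
  show "ropen (\<Union>K)" unfolding ropen_def
  proof (intro conjI ballI)
    show "\<Union>K \<subseteq> RS" using K unfolding ropen_def by blast
    fix c assume "c \<in> X"
    thus "openin (cube_top (dm c)) {t \<in> cube (dm c). fm c t \<in> \<Union>K}"
      unfolding e using K unfolding ropen_def by (intro openin_Union) blast
  qed
qed

lemma RT_eq: "RT = topology ropen"
  unfolding real_top_def ropen_def ..

lemma openin_RT: "openin RT U \<longleftrightarrow> ropen U"
  unfolding RT_eq using istop by simp

lemma fm_in: "c \<in> X \<Longrightarrow> t \<in> cube (dm c) \<Longrightarrow> fm c t \<in> RS"
  unfolding real_map_def real_space_def
  by (rule quotientI) (simp add: real_pts_def)

lemma fm_self: "c \<in> X \<Longrightarrow> t \<in> cube (dm c) \<Longrightarrow> (c,t) \<in> fm c t"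
  unfolding real_map_def real_equiv_def by (simp add: real_pts_def Id_on_iff)

lemma ropen_RS: "ropen RS"
  unfolding ropen_def
proof (intro conjI ballI)
  fix c assume c: "c \<in> X"
  have "{t \<in> cube (dm c). fm c t \<in> RS} = topspace (cube_top (dm c))"
    using fm_in[OF c] by (auto simp: topspace_cube)
  thus "openin (cube_top (dm c)) {t \<in> cube (dm c). fm c t \<in> RS}" by simp
qed simp

lemma topspace_RT: "topspace RT = RS"
proof
  show "topspace RT \<subseteq> RS" unfolding topspace_def openin_RT ropen_def by blast
  show "RS \<subseteq> topspace RT" using ropen_RS openin_RT openin_subset by blast
qed

lemma fm_cont: "c \<in> X \<Longrightarrow> continuous_map (cube_top (dm c)) RT (fm c)"
  unfolding continuous_map_def
proof (intro conjI allI impI)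
  assume c: "c \<in> X"
  show "fm c \<in> topspace (cube_top (dm c)) \<rightarrow> topspace RT"
    using fm_in[OF c] by (auto simp: topspace_cube topspace_RT)
  fix U assume "openin RT U"
  thus "openin (cube_top (dm c)) {x \<in> topspace (cube_top (dm c)). fm c x \<in> U}"
    using c unfolding openin_RT ropen_def topspace_cube by blast
qed

definition preW where "preW c W = {z \<in> topspace (cube_top (dm c)). fm c z \<in> W}"

lemma preW_open: "c \<in> X \<Longrightarrow> openin RT W \<Longrightarrow> openin (cube_top (dm c)) (preW c W)"
  unfolding preW_def using fm_cont by (simp add: continuous_map_def)

definition Gen where
  "Gen U = {(fm c x, fm c y) | c x y W. c \<in> X \<and> openin RT W \<and> W \<subseteq> U \<and>
      (x,y) \<in> cube_circ (dm c) (preW c W)}"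

definition LC where "LC U = (if openin RT U then Id_on U \<union> (Gen U)\<^sup>+ else {})"

lemma Gen_sub: "Gen U \<subseteq> U \<times> U"
proof
  fix p assume "p \<in> Gen U"
  then obtain c x y W where p: "p = (fm c x, fm c y)" "W \<subseteq> U" "(x,y) \<in> cube_circ (dm c) (preW c W)"
    unfolding Gen_def by blast
  from cube_circ_sub[OF p(3)] have "fm c x \<in> W" "fm c y \<in> W" unfolding preW_def by auto
  thus "p \<in> U \<times> U" using p by blast
qed

lemma Gen_mono: "U \<subseteq> U' \<Longrightarrow> Gen U \<subseteq> Gen U'"
  unfolding Gen_def by blast

lemma LC_circ: "is_circulation RT LC"
proof (rule circ_intro)
  fix V assume "\<not> openin RT V" thus "LC V = {}" by (simp add: LC_def)
next
  fix V assume V: "openin RT V"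
  have "(Gen V)\<^sup>+ \<subseteq> V \<times> V" using Gen_sub by (rule trancl_subset_Sigma)
  moreover have "Id_on V \<subseteq> V \<times> V" by (rule Id_on_subset_Times)
  ultimately have "LC V \<subseteq> V \<times> V" using V unfolding LC_def by simp
  moreover have "refl_on V (LC V)" using V unfolding refl_on_def LC_def by (simp add: Id_on_iff)
  moreover have "trans (LC V)" using V trans_Id_trancl unfolding LC_def by simp
  ultimately show "LC V \<subseteq> V \<times> V \<and> refl_on V (LC V) \<and> trans (LC V)" by blast
next
  fix Os assume op: "\<forall>V\<in>Os. openin RT V"
  hence opU: "openin RT (\<Union>Os)" by auto
  let ?R = "Id_on (\<Union>Os) \<union> (\<Union>V\<in>Os. LC V)\<^sup>+"
  have mono: "LC V \<subseteq> LC (\<Union>Os)" if "V \<in> Os" for V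
  proof -
    have "V \<subseteq> \<Union>Os" using that by blast
    hence "(Gen V)\<^sup>+ \<subseteq> (Gen (\<Union>Os))\<^sup>+" by (intro trancl_mono_subset Gen_mono)
    moreover have "Id_on V \<subseteq> Id_on (\<Union>Os)" using \<open>V \<subseteq> \<Union>Os\<close> by (auto simp: Id_on_iff)
    ultimately show ?thesis using op opU that unfolding LC_def by auto
  qed
  show "LC (\<Union>Os) = ?R"
  proof
    have "Gen (\<Union>Os) \<subseteq> ?R"
    proof
      fix p assume "p \<in> Gen (\<Union>Os)"
      then obtain c x y W where p: "p = (fm c x, fm c y)" "c \<in> X" "openin RT W" "W \<subseteq> \<Union>Os"
        "(x,y) \<in> cube_circ (dm c) (preW c W)"
        unfolding Gen_def by blast
      let ?Os' = "(\<lambda>V. preW c (W \<inter> V)) ` Os"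
      have opO': "\<forall>U\<in>?Os'. openin (cube_top (dm c)) U"
        using op p(2,3) preW_open by blast
      have un: "\<Union>?Os' = preW c W" using p(4) unfolding preW_def by blast
      have "cube_circ (dm c) (\<Union>?Os') = Id_on (\<Union>?Os') \<union> (\<Union>U\<in>?Os'. cube_circ (dm c) U)\<^sup>+"
        by (rule circ_cosheaf[OF cube_circ_circ opO'])
      hence "(x,y) \<in> Id_on (preW c W) \<union> (\<Union>U\<in>?Os'. cube_circ (dm c) U)\<^sup>+"
        using p(5) un by simp
      thus "p \<in> ?R"
      proof
        assume "(x,y) \<in> Id_on (preW c W)"
        hence "x = y" "fm c x \<in> W" unfolding preW_def by (auto simp: Id_on_iff)
        thus ?thesis using p(1,4) by (auto simp: Id_on_iff)
      next
        assume xy: "(x,y) \<in> (\<Union>U\<in>?Os'. cube_circ (dm c) U)\<^sup>+"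
        have "(fm c x, fm c y) \<in> (\<Union>V\<in>Os. LC V)\<^sup>+"
        proof (rule trancl_map[OF xy])
          fix a b assume "(a,b) \<in> (\<Union>U\<in>?Os'. cube_circ (dm c) U)"
          then obtain V where V: "V \<in> Os" "(a,b) \<in> cube_circ (dm c) (preW c (W \<inter> V))" by blast
          have "openin RT (W \<inter> V)" using V(1) op p(3) by blast
          hence "(fm c a, fm c b) \<in> Gen V" unfolding Gen_def using V p(2) by blast
          hence "(fm c a, fm c b) \<in> LC V" using V(1) op unfolding LC_def by auto
          thus "(fm c a, fm c b) \<in> (\<Union>V\<in>Os. LC V)" using V(1) by blast
        qed
        thus ?thesis using p(1) by blast
      qed
    qed
    hence "(Gen (\<Union>Os))\<^sup>+ \<subseteq> ?R" using trans_Id_trancl by (rule trancl_into_trans)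
    moreover have "Id_on (\<Union>Os) \<subseteq> ?R" by blast
    ultimately show "LC (\<Union>Os) \<subseteq> ?R" using opU unfolding LC_def by simp
  next
    have "(\<Union>V\<in>Os. LC V) \<subseteq> LC (\<Union>Os)" using mono by blast
    moreover have "trans (LC (\<Union>Os))" using opU trans_Id_trancl unfolding LC_def by simp
    ultimately have "(\<Union>V\<in>Os. LC V)\<^sup>+ \<subseteq> LC (\<Union>Os)" by (rule trancl_into_trans)
    moreover have "Id_on (\<Union>Os) \<subseteq> LC (\<Union>Os)" using opU unfolding LC_def by simp
    ultimately show "?R \<subseteq> LC (\<Union>Os)" by blast
  qed
qed

lemma LC_cons: "c \<in> X \<Longrightarrow> stream_map (cube_top (dm c)) (cube_circ (dm c)) RT LC (fm c)"
  unfolding stream_map_def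
proof (intro conjI allI impI)
  assume c: "c \<in> X"
  show "continuous_map (cube_top (dm c)) RT (fm c)" using fm_cont[OF c] .
  fix V x y assume V: "openin RT V" and xy: "(x, y) \<in> cube_circ (dm c) {z \<in> topspace (cube_top (dm c)). fm c z \<in> V}"
  have "(fm c x, fm c y) \<in> Gen V" unfolding Gen_def using c V xy unfolding preW_def by blast
  thus "(fm c x, fm c y) \<in> LC V" using V unfolding LC_def by (simp add: r_into_trancl')
qed

lemma LC_least:
  assumes C: "is_circulation RT C" and cons: "\<forall>c\<in>X. stream_map (cube_top (dm c)) (cube_circ (dm c)) RT C (fm c)"
  shows "LC U \<subseteq> C U"
proof (cases "openin RT U")
  case True
  have "Gen U \<subseteq> C U"
  proof
    fix p assume "p \<in> Gen U"
    then obtain c x y W where p: "p = (fm c x, fm c y)" "c \<in> X" "openin RT W" "W \<subseteq> U"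
        "(x,y) \<in> cube_circ (dm c) (preW c W)"
      unfolding Gen_def by blast
    have "(fm c x, fm c y) \<in> C W" using cons p(2,3,5) unfolding stream_map_def preW_def by blast
    moreover have "C W \<subseteq> C U" using circ_mono[OF C p(3) True p(4)] .
    ultimately show "p \<in> C U" using p(1) by blast
  qed
  hence "(Gen U)\<^sup>+ \<subseteq> C U" using circ_trans[OF C] by (rule trancl_into_trans)
  moreover have "Id_on U \<subseteq> C U" using circ_refl[OF C True] by (auto simp: Id_on_iff)
  ultimately show ?thesis using True unfolding LC_def by simp
next
  case False thus ?thesis unfolding LC_def by simp
qed

lemma real_circ_eq: "real_circ X dm d = LC"
  unfolding real_circ_def
proof (rule the_equality)
  show "is_circulation RT LC \<and> (\<forall>c\<in>X. stream_map (cube_top (dm c)) (cube_circ (dm c)) RT LC (fm c)) \<and>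
    (\<forall>C'. is_circulation RT C' \<and> (\<forall>c\<in>X. stream_map (cube_top (dm c)) (cube_circ (dm c)) RT C' (fm c))
       \<longrightarrow> (\<forall>V. LC V \<subseteq> C' V))"
    using LC_circ LC_cons LC_least by blast
next
  fix C assume C: "is_circulation RT C \<and> (\<forall>c\<in>X. stream_map (cube_top (dm c)) (cube_circ (dm c)) RT C (fm c)) \<and>
    (\<forall>C'. is_circulation RT C' \<and> (\<forall>c\<in>X. stream_map (cube_top (dm c)) (cube_circ (dm c)) RT C' (fm c))
       \<longrightarrow> (\<forall>V. C V \<subseteq> C' V))"
  show "C = LC"
  proof
    fix V
    have "LC V \<subseteq> C V" using C LC_least by blast
    moreover have "C V \<subseteq> LC V" using C LC_circ LC_cons by blast
    ultimately show "C V = LC V" by (rule subset_antisym[rotated])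
  qed
qed

end


definition kv :: "bool \<Rightarrow> real" where "kv k = (if k then 1 else 0)"

lemma coface_at: "coface i k t i = kv k" by (simp add: coface_def kv_def)
lemma coface_lt: "j < i \<Longrightarrow> coface i k t j = t j" by (simp add: coface_def)
lemma coface_gt: "i < j \<Longrightarrow> coface i k t j = t (j - 1)" by (simp add: coface_def)

lemma coface_comm: "i < j \<Longrightarrow> coface i k (coface (j - 1) l u) = coface j l (coface i k u)"
  unfolding coface_def fun_eq_iff by auto

lemma coface_cube: "i < n \<Longrightarrow> t \<in> cube (n - 1) \<Longrightarrow> coface i k t \<in> cube n"
  unfolding cube_def coface_def by auto

lemma sum_coface:
  fixes g :: "real \<Rightarrow> real"
  assumes "i \<le> n"
  shows "(\<Sum>j<Suc n. g (coface i k b j)) = g (kv k) + (\<Sum>j<n. g (b j))"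
  using assms
proof (induction n rule: dec_induct)
  case base
  have "(\<Sum>j<Suc i. g (coface i k b j)) = (\<Sum>j<i. g (coface i k b j)) + g (coface i k b i)" by simp
  also have "(\<Sum>j<i. g (coface i k b j)) = (\<Sum>j<i. g (b j))" by (intro sum.cong) (auto simp: coface_lt)
  finally show ?case by (simp add: coface_at)
next
  case (step m)
  have "(\<Sum>j<Suc (Suc m). g (coface i k b j)) = (\<Sum>j<Suc m. g (coface i k b j)) + g (coface i k b (Suc m))" by simp
  also have "coface i k b (Suc m) = b m" using step(1) by (simp add: coface_gt)
  finally show ?case using step(3) by simp
qed

fun fseq :: "(nat \<Rightarrow> bool \<Rightarrow> 'c \<Rightarrow> 'c) \<Rightarrow> 'c \<Rightarrow> (nat \<times> bool) list \<Rightarrow> 'c" where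
  "fseq d c [] = c"
| "fseq d c ((i,k)#e) = fseq d (d i k c) e"

fun valid :: "('c \<Rightarrow> nat) \<Rightarrow> (nat \<Rightarrow> bool \<Rightarrow> 'c \<Rightarrow> 'c) \<Rightarrow> 'c \<Rightarrow> (nat \<times> bool) list \<Rightarrow> bool" where
  "valid dm d c [] = True"
| "valid dm d c ((i,k)#e) = (i < dm c \<and> valid dm d (d i k c) e)"

fun cof :: "(nat \<times> bool) list \<Rightarrow> (nat \<Rightarrow> real) \<Rightarrow> (nat \<Rightarrow> real)" where
  "cof [] s = s"
| "cof ((i,k)#e) s = coface i k (cof e s)"

locale pcs = rz X dm d for X :: "'c set" and dm d +
  assumes pc: "precubical X dm d"
begin

lemma face_in: "c \<in> X \<Longrightarrow> i < dm c \<Longrightarrow> d i k c \<in> X"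
  using pc unfolding precubical_def by blast
lemma face_dim: "c \<in> X \<Longrightarrow> i < dm c \<Longrightarrow> dm (d i k c) = dm c - 1"
  using pc unfolding precubical_def by blast
lemma face_comm: "c \<in> X \<Longrightarrow> i < j \<Longrightarrow> j < dm c \<Longrightarrow> d i k (d j l c) = d (j - 1) l (d i k c)"
  using pc unfolding precubical_def by blast

lemma fseq_in: "c \<in> X \<Longrightarrow> valid dm d c e \<Longrightarrow> fseq d c e \<in> X"
  by (induction e arbitrary: c) (auto simp: face_in)

lemma cof_cube: "c \<in> X \<Longrightarrow> valid dm d c e \<Longrightarrow> s \<in> cube (dm (fseq d c e)) \<Longrightarrow> cof e s \<in> cube (dm c)"
proof (induction e arbitrary: c)
  case (Cons p e)
  obtain i k where p: "p = (i,k)" by (cases p)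
  have i: "i < dm c" and v: "valid dm d (d i k c) e" using Cons.prems p by auto
  have "cof e s \<in> cube (dm (d i k c))" using Cons.IH[OF face_in[OF Cons.prems(1) i] v] Cons.prems(3) p by simp
  thus ?case using p coface_cube[OF i] face_dim[OF Cons.prems(1) i] by simp
qed simp

lemma key:
  assumes "c \<in> X" "valid dm d c e" "i < dm c" "cof e s i = kv k"
    "\<forall>j<dm (fseq d c e). 0 < s j \<and> s j < 1"
  shows "\<exists>e'. valid dm d (d i k c) e' \<and> fseq d (d i k c) e' = fseq d c e \<and> coface i k (cof e' s) = cof e s"
  using assms
proof (induction e arbitrary: c i)
  case Nil
  thus ?case by (auto simp: kv_def split: if_splits)
next
  case (Cons p e)
  obtain j l where p: "p = (j,l)" by (cases p)
  have j: "j < dm c" and v: "valid dm d (d j l c) e" using Cons.prems p by auto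
  have cX: "d j l c \<in> X" using face_in[OF Cons.prems(1) j] .
  have dj: "dm (d j l c) = dm c - 1" using face_dim[OF Cons.prems(1) j] .
  have ev: "cof (p#e) s i = coface j l (cof e s) i" using p by simp
  have sint: "\<forall>ja<dm (fseq d (d j l c) e). 0 < s ja \<and> s ja < 1" using Cons.prems(5) p by simp
  consider "i = j" | "i < j" | "j < i" by linarith
  thus ?case
  proof cases
    case 1
    hence "kv l = kv k" using Cons.prems(4) ev coface_at by metis
    hence "l = k" by (auto simp: kv_def split: if_splits)
    thus ?thesis using 1 p v by (intro exI[of _ e]) simp
  next
    case 2
    have "cof e s i = kv k" using Cons.prems(4) ev coface_lt[OF 2] by simp
    moreover have "i < dm (d j l c)" using 2 j dj by simp
    ultimately obtain e1 where e1: "valid dm d (d i k (d j l c)) e1" "fseq d (d i k (d j l c)) e1 = fseq d (d j l c) e"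
      "coface i k (cof e1 s) = cof e s"
      using Cons.IH[OF cX v] sint by blast
    have fc: "d i k (d j l c) = d (j - 1) l (d i k c)" using face_comm[OF Cons.prems(1) 2 j] .
    have "j - 1 < dm (d i k c)" using face_dim[OF Cons.prems(1) Cons.prems(3)] 2 j by simp
    hence "valid dm d (d i k c) ((j - 1, l) # e1)" using e1(1) fc by simp
    moreover have "fseq d (d i k c) ((j - 1, l) # e1) = fseq d c (p # e)" using e1(2) fc p by simp
    moreover have "coface i k (cof ((j - 1, l) # e1) s) = cof (p#e) s"
      using coface_comm[OF 2, of k l "cof e1 s"] e1(3) p by simp
    ultimately show ?thesis by blast
  next
    case 3
    have "cof e s (i - 1) = kv k" using Cons.prems(4) ev coface_gt[OF 3] by simp
    moreover have "i - 1 < dm (d j l c)" using 3 Cons.prems(3) dj by simp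
    ultimately obtain e1 where e1: "valid dm d (d (i - 1) k (d j l c)) e1"
      "fseq d (d (i - 1) k (d j l c)) e1 = fseq d (d j l c) e"
      "coface (i - 1) k (cof e1 s) = cof e s"
      using Cons.IH[OF cX v] sint by blast
    have fc: "d j l (d i k c) = d (i - 1) k (d j l c)" using face_comm[OF Cons.prems(1) 3 Cons.prems(3)] .
    have "j < dm (d i k c)" using face_dim[OF Cons.prems(1) Cons.prems(3)] 3 Cons.prems(3) by simp
    hence "valid dm d (d i k c) ((j, l) # e1)" using e1(1) fc by simp
    moreover have "fseq d (d i k c) ((j, l) # e1) = fseq d c (p # e)" using e1(2) fc p by simp
    moreover have "coface i k (cof ((j, l) # e1) s) = cof (p#e) s"
      using coface_comm[OF 3, of l k "cof e1 s"] e1(3) p by simp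
    ultimately show ?thesis by blast
  qed
qed

lemma sum_cof:
  fixes g :: "real \<Rightarrow> real"
  assumes "c \<in> X" "valid dm d c e"
  shows "(\<Sum>j<dm c. g (cof e s j)) = (\<Sum>j<dm (fseq d c e). g (s j)) + (\<Sum>p\<leftarrow>e. g (kv (snd p)))"
  using assms
proof (induction e arbitrary: c)
  case (Cons p e)
  obtain i k where p: "p = (i,k)" by (cases p)
  have i: "i < dm c" and v: "valid dm d (d i k c) e" using Cons.prems p by auto
  have dj: "dm c = Suc (dm (d i k c))" using face_dim[OF Cons.prems(1) i] i by simp
  have "(\<Sum>j<dm c. g (cof (p#e) s j)) = (\<Sum>j<Suc (dm (d i k c)). g (coface i k (cof e s) j))"
    using dj p by simp
  also have "\<dots> = g (kv k) + (\<Sum>j<dm (d i k c). g (cof e s j))"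
    using i dj by (intro sum_coface) simp
  also have "(\<Sum>j<dm (d i k c). g (cof e s j)) = (\<Sum>j<dm (fseq d (d i k c) e). g (s j)) + (\<Sum>p\<leftarrow>e. g (kv (snd p)))"
    using Cons.IH[OF face_in[OF Cons.prems(1) i] v] .
  finally show ?case using p by simp
qed simp

lemma carrier:
  assumes "c \<in> X" "t \<in> cube (dm c)"
  shows "\<exists>e s. valid dm d c e \<and> cof e s = t \<and> (\<forall>j<dm (fseq d c e). 0 < s j \<and> s j < 1) \<and>
     (\<forall>j\<ge>dm (fseq d c e). s j = 0)"
  using assms
proof (induction "dm c" arbitrary: c t rule: less_induct)
  case less
  show ?case
  proof (cases "\<forall>j<dm c. 0 < t j \<and> t j < 1")
    case True
    thus ?thesis using less.prems(2) by (intro exI[of _ "[]"] exI[of _ t]) (auto simp: cube_def)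
  next
    case False
    then obtain i where i: "i < dm c" "\<not> (0 < t i \<and> t i < 1)" by blast
    hence "t i = 0 \<or> t i = 1" using less.prems(2) unfolding cube_def by force
    then obtain k where k: "t i = kv k" unfolding kv_def by (metis (full_types))
    define t' where "t' = (\<lambda>j. if j < i then t j else t (Suc j))"
    have t': "t' \<in> cube (dm (d i k c))"
      using less.prems(2) i(1) face_dim[OF less.prems(1) i(1)] unfolding cube_def t'_def by auto
    have ct: "coface i k t' = t"
      unfolding fun_eq_iff coface_def t'_def using k by (auto simp: kv_def)
    have "dm (d i k c) < dm c" using face_dim[OF less.prems(1) i(1)] i(1) by simp
    then obtain e s where es: "valid dm d (d i k c) e" "cof e s = t'"
      "\<forall>j<dm (fseq d (d i k c) e). 0 < s j \<and> s j < 1" "\<forall>j\<ge>dm (fseq d (d i k c) e). s j = 0"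
      using less.hyps[OF _ face_in[OF less.prems(1) i(1)] t'] by blast
    show ?thesis
      using es i(1) ct by (intro exI[of _ "(i,k)#e"] exI[of _ s]) simp
  qed
qed

end


definition ind1 :: "real \<Rightarrow> real" where "ind1 v = (if v = 1 then 1 else 0)"

lemma ind1_kv: "ind1 (kv k) = kv k" by (simp add: ind1_def kv_def)

lemma near_coface:
  assumes "i < Suc n"
  shows "(\<forall>j<Suc n. \<bar>coface i k t j - coface i k a j\<bar> < r) \<longleftrightarrow> (\<forall>j<n. \<bar>t j - a j\<bar> < r) \<and> 0 < r"
proof
  assume h: "\<forall>j<Suc n. \<bar>coface i k t j - coface i k a j\<bar> < r"
  have "0 < r" using h assms by (metis abs_ge_zero coface_at diff_self order_le_less_trans)
  moreover have "\<bar>t j - a j\<bar> < r" if j: "j < n" for j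
  proof (cases "j < i")
    case True thus ?thesis using h j coface_lt[OF True] by (metis less_SucI)
  next
    case False
    hence "i < Suc j" by simp
    thus ?thesis using h j coface_gt[OF \<open>i < Suc j\<close>] by (metis Suc_less_eq diff_Suc_1)
  qed
  ultimately show "(\<forall>j<n. \<bar>t j - a j\<bar> < r) \<and> 0 < r" by blast
next
  assume h: "(\<forall>j<n. \<bar>t j - a j\<bar> < r) \<and> 0 < r"
  show "\<forall>j<Suc n. \<bar>coface i k t j - coface i k a j\<bar> < r"
  proof (intro allI impI)
    fix j assume j: "j < Suc n"
    consider "j < i" | "j = i" | "i < j" by linarith
    thus "\<bar>coface i k t j - coface i k a j\<bar> < r"
    proof cases
      case 1 thus ?thesis using h j assms by (simp add: coface_lt)
    next
      case 2 thus ?thesis using h by (simp add: coface_at)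
    next
      case 3 thus ?thesis using h j by (simp add: coface_gt)
    qed
  qed
qed

locale star = pcs X dm d for X :: "'c set" and dm d +
  fixes c0 :: 'c and s :: "nat \<Rightarrow> real" and \<epsilon> :: real
  assumes c0X: "c0 \<in> X"
    and s_int: "\<forall>j<dm c0. \<epsilon> \<le> s j \<and> s j \<le> 1 - \<epsilon>"
    and s_zero: "\<forall>j\<ge>dm c0. s j = 0"
    and eps: "0 < \<epsilon>" "\<epsilon> \<le> 1/2"
begin

definition good where "good v \<longleftrightarrow> v = 0 \<or> v = 1 \<or> (\<epsilon> \<le> v \<and> v \<le> 1 - \<epsilon>)"
definition Wt where "Wt c = {a. \<exists>e. valid dm d c e \<and> fseq d c e = c0 \<and> a = cof e s}"
definition near where "near c a t \<longleftrightarrow> (\<forall>j<dm c. \<bar>t j - a j\<bar> < \<epsilon>/2)"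
definition Q where "Q u \<longleftrightarrow> fst u \<in> X \<and> snd u \<in> cube (dm (fst u)) \<and> (\<exists>a\<in>Wt (fst u). near (fst u) a (snd u))"
definition sig where "sig c t = (\<Sum>j<dm c. (SOME a. a \<in> Wt c \<and> near c a t) j)"
definition phi where "phi u = (\<Sum>j<dm (fst u). snd u j) - sig (fst u) (snd u)"

lemma cof_good: "good (cof e s j)"
proof (induction e arbitrary: j)
  case Nil
  show ?case using s_int s_zero unfolding good_def by (cases "j < dm c0") auto
next
  case (Cons p e)
  obtain i k where p: "p = (i,k)" by (cases p)
  show ?case using Cons.IH unfolding p by (auto simp: coface_def good_def)
qed

lemma s_open: "\<forall>j<dm c0. 0 < s j \<and> s j < 1"
  using s_int eps by force

lemma Wt_sum:
  assumes "c \<in> X" "a \<in> Wt c"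
  shows "(\<Sum>j<dm c. a j) = (\<Sum>j<dm c0. s j) + (\<Sum>j<dm c. ind1 (a j))"
proof -
  obtain e where e: "valid dm d c e" "fseq d c e = c0" "a = cof e s" using assms(2) unfolding Wt_def by blast
  have 1: "(\<Sum>j<dm c. id (cof e s j)) = (\<Sum>j<dm c0. id (s j)) + (\<Sum>p\<leftarrow>e. id (kv (snd p)))"
    using sum_cof[OF assms(1) e(1)] e(2) by metis
  have 2: "(\<Sum>j<dm c. ind1 (cof e s j)) = (\<Sum>j<dm c0. ind1 (s j)) + (\<Sum>p\<leftarrow>e. ind1 (kv (snd p)))"
    using sum_cof[OF assms(1) e(1)] e(2) by metis
  have "(\<Sum>j<dm c0. ind1 (s j)) = 0"
    using s_int eps by (intro sum.neutral) (auto simp: ind1_def)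
  moreover have "(\<Sum>p\<leftarrow>e. ind1 (kv (snd p))) = (\<Sum>p\<leftarrow>e. id (kv (snd p)))" by (simp add: ind1_kv)
  ultimately show ?thesis using 1 2 e(3) by simp
qed

lemma good_close: "good v \<Longrightarrow> good w \<Longrightarrow> \<bar>v - w\<bar> < \<epsilon> \<Longrightarrow> ind1 v = ind1 w"
  unfolding good_def ind1_def using eps by auto

lemma wit_unique:
  assumes "c \<in> X" "a \<in> Wt c" "a' \<in> Wt c" "near c a t" "near c a' t"
  shows "(\<Sum>j<dm c. a j) = (\<Sum>j<dm c. a' j)"
proof -
  have ga: "good (a j)" "good (a' j)" for j using assms(2,3) cof_good unfolding Wt_def by auto
  have "ind1 (a j) = ind1 (a' j)" if "j < dm c" for j
  proof (rule good_close[OF ga])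
    have "\<bar>t j - a j\<bar> < \<epsilon>/2" "\<bar>t j - a' j\<bar> < \<epsilon>/2" using assms(4,5) that unfolding near_def by auto
    thus "\<bar>a j - a' j\<bar> < \<epsilon>" by linarith
  qed
  hence "(\<Sum>j<dm c. ind1 (a j)) = (\<Sum>j<dm c. ind1 (a' j))" by (intro sum.cong) auto
  thus ?thesis using Wt_sum[OF assms(1,2)] Wt_sum[OF assms(1,3)] by simp
qed

lemma sig_eq:
  assumes "c \<in> X" "a \<in> Wt c" "near c a t"
  shows "sig c t = (\<Sum>j<dm c. a j)"
proof -
  let ?b = "SOME a. a \<in> Wt c \<and> near c a t"
  have "?b \<in> Wt c \<and> near c ?b t" using assms(2,3) by (metis (mono_tags, lifting) someI)
  hence "(\<Sum>j<dm c. ?b j) = (\<Sum>j<dm c. a j)" using wit_unique[OF assms(1) _ assms(2) _ assms(3)] by blast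
  thus ?thesis unfolding sig_def .
qed

lemma gen_inv:
  assumes c: "c \<in> X" and i: "i < dm c" and t: "t \<in> cube (dm c - 1)"
  shows "(Q (d i k c, t) \<longleftrightarrow> Q (c, coface i k t)) \<and> (Q (d i k c, t) \<longrightarrow> phi (d i k c, t) = phi (c, coface i k t))"
proof -
  have dX: "d i k c \<in> X" using face_in[OF c i] .
  have dd: "dm (d i k c) = dm c - 1" using face_dim[OF c i] .
  have sc: "dm c = Suc (dm (d i k c))" using dd i by simp
  have iS: "i < Suc (dm (d i k c))" using sc i by simp
  have tc: "coface i k t \<in> cube (dm c)" using coface_cube[OF i t] .
  have nc: "near c (coface i k a) (coface i k t) \<longleftrightarrow> near (d i k c) a t" for a
    unfolding near_def sc using near_coface[OF iS, of k t a "\<epsilon>/2"] eps by simp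
  have sumco: "(\<Sum>j<dm c. coface i k b j) = kv k + (\<Sum>j<dm (d i k c). b j)" for b
    unfolding sc using sum_coface[of i "dm (d i k c)" "\<lambda>x. x" k b] iS by simp
  have fw: "\<exists>a\<in>Wt c. near c a (coface i k t) \<and> (\<Sum>j<dm c. a j) = kv k + (\<Sum>j<dm (d i k c). a0 j)"
    if a0: "a0 \<in> Wt (d i k c)" "near (d i k c) a0 t" for a0
  proof -
    obtain e where e: "valid dm d (d i k c) e" "fseq d (d i k c) e = c0" "a0 = cof e s"
      using a0(1) unfolding Wt_def by blast
    have "coface i k a0 \<in> Wt c" unfolding Wt_def
      using e i by (intro CollectI exI[of _ "(i,k)#e"]) simp
    moreover have "near c (coface i k a0) (coface i k t)" using nc a0(2) by simp
    ultimately show ?thesis using sumco by blast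
  qed
  have bw: "\<exists>a0\<in>Wt (d i k c). near (d i k c) a0 t" if a: "a \<in> Wt c" "near c a (coface i k t)" for a
  proof -
    obtain e where e: "valid dm d c e" "fseq d c e = c0" "a = cof e s"
      using a(1) unfolding Wt_def by blast
    have "\<bar>coface i k t i - a i\<bar> < \<epsilon>/2" using a(2) i unfolding near_def by blast
    hence "\<bar>kv k - a i\<bar> < \<epsilon>" using eps by (simp add: coface_at)
    moreover have "good (a i)" using e(3) cof_good by simp
    ultimately have ai: "a i = kv k" unfolding good_def kv_def using eps
      by (cases k) (auto simp: abs_if split: if_splits)
    obtain e' where e': "valid dm d (d i k c) e'" "fseq d (d i k c) e' = fseq d c e"
      "coface i k (cof e' s) = cof e s"
      using key[OF c e(1) i, where k=k and s=s] ai e(2,3) s_open by auto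
    have "cof e' s \<in> Wt (d i k c)" unfolding Wt_def using e' e(2) by blast
    moreover have "near (d i k c) (cof e' s) t" using nc[of "cof e' s"] e'(3) e(3) a(2) by simp
    ultimately show ?thesis by blast
  qed
  have "Q (d i k c, t) \<longleftrightarrow> Q (c, coface i k t)"
    unfolding Q_def using dX c t tc fw bw dd by auto
  moreover have "phi (d i k c, t) = phi (c, coface i k t)" if q: "Q (d i k c, t)"
  proof -
    obtain a0 where a0: "a0 \<in> Wt (d i k c)" "near (d i k c) a0 t" using q unfolding Q_def by auto
    obtain a where a: "a \<in> Wt c" "near c a (coface i k t)" "(\<Sum>j<dm c. a j) = kv k + (\<Sum>j<dm (d i k c). a0 j)"
      using fw[OF a0] by blast
    have "sig (d i k c) t = (\<Sum>j<dm (d i k c). a0 j)" using sig_eq[OF dX a0] .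
    moreover have "sig c (coface i k t) = (\<Sum>j<dm c. a j)" using sig_eq[OF c a(1,2)] .
    ultimately show ?thesis unfolding phi_def using a(3) sumco[of t] by simp
  qed
  ultimately show ?thesis by blast
qed

lemma gen_sym:
  assumes "(u,v) \<in> real_gen X dm d \<union> (real_gen X dm d)\<inverse>"
  shows "(Q u \<longleftrightarrow> Q v) \<and> (Q u \<longrightarrow> phi u = phi v)"
  using assms
proof
  assume "(u,v) \<in> real_gen X dm d"
  then obtain c i k t where "u = (d i k c, t)" "v = (c, coface i k t)" "c \<in> X" "i < dm c" "t \<in> cube (dm c - 1)"
    unfolding real_gen_def by blast
  thus ?thesis using gen_inv by blast
next
  assume "(u,v) \<in> (real_gen X dm d)\<inverse>"
  then obtain c i k t where "v = (d i k c, t)" "u = (c, coface i k t)" "c \<in> X" "i < dm c" "t \<in> cube (dm c - 1)"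
    unfolding real_gen_def by blast
  thus ?thesis using gen_inv by metis
qed

lemma RE_inv:
  assumes "(u,v) \<in> RE"
  shows "(Q u \<longleftrightarrow> Q v) \<and> (Q u \<longrightarrow> phi u = phi v)"
proof -
  have "(u,v) \<in> Id_on (real_pts X dm) \<union> (real_gen X dm d \<union> (real_gen X dm d)\<inverse>)\<^sup>+"
    using assms unfolding real_equiv_def .
  thus ?thesis
  proof
    assume "(u,v) \<in> Id_on (real_pts X dm)" thus ?thesis by (auto simp: Id_on_iff)
  next
    assume "(u,v) \<in> (real_gen X dm d \<union> (real_gen X dm d)\<inverse>)\<^sup>+"
    thus ?thesis
    proof (induction rule: trancl_induct)
      case (base y) thus ?case by (rule gen_sym)
    next
      case (step y z) thus ?case using gen_sym[OF step(2)] by (metis (full_types))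
    qed
  qed
qed

end


context star
begin

definition Vs where "Vs = {P \<in> RS. \<exists>u\<in>P. Q u}"
definition Phi where "Phi P = phi (SOME u. u \<in> P \<and> Q u)"
definition Bl where "Bl c a = {t. \<forall>j<dm c. \<bar>t j - a j\<bar> < \<epsilon>/2}"

lemma fm_mem: "u \<in> fm c t \<longleftrightarrow> ((c,t),u) \<in> RE"
  unfolding real_map_def by simp

lemma fm_Q:
  assumes c: "c \<in> X" and t: "t \<in> cube (dm c)"
  shows "(fm c t \<in> Vs \<longleftrightarrow> Q (c,t)) \<and> (Q (c,t) \<longrightarrow> Phi (fm c t) = phi (c,t))"
proof -
  have "fm c t \<in> Vs \<longleftrightarrow> Q (c,t)"
  proof
    assume "fm c t \<in> Vs"
    then obtain u where "u \<in> fm c t" "Q u" unfolding Vs_def by blast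
    thus "Q (c,t)" using RE_inv fm_mem by blast
  next
    assume "Q (c,t)"
    thus "fm c t \<in> Vs" unfolding Vs_def using fm_in[OF c t] fm_self[OF c t] by blast
  qed
  moreover have "Phi (fm c t) = phi (c,t)" if q: "Q (c,t)"
  proof -
    let ?u = "SOME u. u \<in> fm c t \<and> Q u"
    have "?u \<in> fm c t \<and> Q ?u" using fm_self[OF c t] q by (metis (mono_tags, lifting) someI)
    hence "((c,t), ?u) \<in> RE" using fm_mem by blast
    hence "phi (c,t) = phi ?u" using RE_inv q by blast
    thus ?thesis unfolding Phi_def by simp
  qed
  ultimately show ?thesis by blast
qed

lemma Bl_open: "open (Bl c a)"
proof -
  have "Bl c a = (\<Inter>j\<in>{..<dm c}. {t. \<bar>t j - a j\<bar> < \<epsilon>/2})" unfolding Bl_def by blast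
  moreover have "open {t::nat\<Rightarrow>real. \<bar>t j - a j\<bar> < \<epsilon>/2}" for j
    by (intro open_Collect_less continuous_on_rabs continuous_on_diff continuous_on_const
        continuous_on_product_coordinates)
  ultimately show ?thesis by (simp add: open_INT)
qed

lemma Q_iff: "c \<in> X \<Longrightarrow> t \<in> cube (dm c) \<Longrightarrow> Q (c,t) \<longleftrightarrow> t \<in> (\<Union>a\<in>Wt c. Bl c a)"
  unfolding Q_def Bl_def near_def by auto

lemma Vs_open: "openin RT Vs"
  unfolding openin_RT ropen_def
proof (intro conjI ballI)
  show "Vs \<subseteq> RS" unfolding Vs_def by blast
  fix c assume c: "c \<in> X"
  have "{t \<in> cube (dm c). fm c t \<in> Vs} = cube (dm c) \<inter> (\<Union>a\<in>Wt c. Bl c a)"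
    using fm_Q[OF c] Q_iff[OF c] by blast
  moreover have "open (\<Union>a\<in>Wt c. Bl c a)" using Bl_open by blast
  ultimately show "openin (cube_top (dm c)) {t \<in> cube (dm c). fm c t \<in> Vs}"
    unfolding cube_top_def by (simp add: openin_open_Int)
qed

lemma sum_lt_or_eq:
  assumes "x \<in> cube n" "y \<in> cube n" "\<forall>j<n. x j \<le> y j"
  shows "(\<Sum>j<n. x j) < (\<Sum>j<n. y j) \<or> x = y"
proof (cases "\<exists>j<n. x j < y j")
  case True
  hence "(\<Sum>j<n. x j) < (\<Sum>j<n. y j)" using assms(3) by (intro sum_strict_mono_ex1) auto
  thus ?thesis by blast
next
  case False
  hence "x j = y j" for j using assms unfolding cube_def by (cases "j < n") force+
  thus ?thesis by blast
qed

lemma cube_step: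
  assumes c: "c \<in> X" and W: "openin RT W" "W \<subseteq> Vs"
    and xy: "(x,y) \<in> cube_circ (dm c) (preW c W)"
  shows "phi (c,x) < phi (c,y) \<or> x = y"
proof -
  let ?n = "dm c"
  let ?P = "preW c W"
  have Pc: "?P \<subseteq> cube ?n" unfolding preW_def topspace_cube by blast
  have PQ: "Q (c,t)" if "t \<in> ?P" for t
    using that W(2) fm_Q[OF c] unfolding preW_def topspace_cube by blast
  let ?Os = "(\<lambda>a. ?P \<inter> Bl c a) ` Wt c"
  have opP: "openin (cube_top ?n) ?P" using preW_open[OF c W(1)] .
  have opO: "\<forall>U\<in>?Os. openin (cube_top ?n) U"
  proof
    fix U assume "U \<in> ?Os"
    then obtain a where U: "U = ?P \<inter> Bl c a" by blast
    have "openin (cube_top ?n) (cube ?n \<inter> Bl c a)" unfolding cube_top_def using Bl_open by (simp add: openin_open_Int)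
    hence "openin (cube_top ?n) (?P \<inter> (cube ?n \<inter> Bl c a))" using opP by blast
    moreover have "?P \<inter> (cube ?n \<inter> Bl c a) = U" using U Pc by blast
    ultimately show "openin (cube_top ?n) U" by simp
  qed
  have un: "\<Union>?Os = ?P"
  proof
    show "\<Union>?Os \<subseteq> ?P" by blast
    show "?P \<subseteq> \<Union>?Os"
    proof
      fix t assume t: "t \<in> ?P"
      hence "t \<in> (\<Union>a\<in>Wt c. Bl c a)" using PQ Q_iff[OF c] Pc by blast
      thus "t \<in> \<Union>?Os" using t by blast
    qed
  qed
  have "cube_circ ?n (\<Union>?Os) = Id_on (\<Union>?Os) \<union> (\<Union>U\<in>?Os. cube_circ ?n U)\<^sup>+"
    by (rule circ_cosheaf[OF cube_circ_circ opO])
  hence "(x,y) \<in> Id_on ?P \<union> (\<Union>U\<in>?Os. cube_circ ?n U)\<^sup>+" using xy un by simp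
  thus ?thesis
  proof
    assume "(x,y) \<in> Id_on ?P" thus ?thesis by (simp add: Id_on_iff)
  next
    assume "(x,y) \<in> (\<Union>U\<in>?Os. cube_circ ?n U)\<^sup>+"
    thus ?thesis
    proof (induction rule: trancl_induct)
      case (base y)
      then obtain a where a: "a \<in> Wt c" "(x,y) \<in> cube_circ ?n (?P \<inter> Bl c a)" by blast
      have mem: "x \<in> ?P \<inter> Bl c a" "y \<in> ?P \<inter> Bl c a" using cube_circ_sub[OF a(2)] by auto
      have nx: "near c a x" "near c a y" using mem unfolding Bl_def near_def by auto
      have "\<forall>j<?n. x j \<le> y j" using cube_circ_le[OF a(2)] by blast
      hence "(\<Sum>j<?n. x j) < (\<Sum>j<?n. y j) \<or> x = y" using sum_lt_or_eq Pc mem by blast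
      moreover have "sig c x = sig c y" using sig_eq[OF c a(1) nx(1)] sig_eq[OF c a(1) nx(2)] by simp
      ultimately show ?case unfolding phi_def by auto
    next
      case (step y z)
      then obtain a where a: "a \<in> Wt c" "(y,z) \<in> cube_circ ?n (?P \<inter> Bl c a)" by blast
      have mem: "y \<in> ?P \<inter> Bl c a" "z \<in> ?P \<inter> Bl c a" using cube_circ_sub[OF a(2)] by auto
      have nx: "near c a y" "near c a z" using mem unfolding Bl_def near_def by auto
      have "\<forall>j<?n. y j \<le> z j" using cube_circ_le[OF a(2)] by blast
      hence "(\<Sum>j<?n. y j) < (\<Sum>j<?n. z j) \<or> y = z" using sum_lt_or_eq Pc mem by blast
      moreover have "sig c y = sig c z" using sig_eq[OF c a(1) nx(1)] sig_eq[OF c a(1) nx(2)] by simp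
      ultimately have "phi (c,y) < phi (c,z) \<or> y = z" unfolding phi_def by auto
      thus ?case using step.IH by auto
    qed
  qed
qed

lemma Gen_step:
  assumes "(P1,P2) \<in> Gen Vs"
  shows "Phi P1 < Phi P2 \<or> P1 = P2"
proof -
  obtain c x y W where p: "P1 = fm c x" "P2 = fm c y" "c \<in> X" "openin RT W" "W \<subseteq> Vs"
     "(x,y) \<in> cube_circ (dm c) (preW c W)"
    using assms unfolding Gen_def by blast
  have mem: "x \<in> preW c W" "y \<in> preW c W" using cube_circ_sub[OF p(6)] by auto
  hence xc: "x \<in> cube (dm c)" "y \<in> cube (dm c)" and fW: "fm c x \<in> Vs" "fm c y \<in> Vs"
    using p(5) unfolding preW_def topspace_cube by auto
  have "Q (c,x)" "Q (c,y)" using fW fm_Q[OF p(3)] xc by auto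
  hence "Phi P1 = phi (c,x)" "Phi P2 = phi (c,y)" using fm_Q[OF p(3)] xc p(1,2) by auto
  thus ?thesis using cube_step[OF p(3,4,5,6)] p(1,2) by auto
qed

lemma Vs_antisym: "antisym (real_circ X dm d Vs)"
proof (rule antisymI)
  have tr: "Phi a < Phi b \<or> a = b" if "(a,b) \<in> (Gen Vs)\<^sup>+" for a b
    using that
  proof (induction rule: trancl_induct)
    case (base y) thus ?case by (rule Gen_step)
  next
    case (step y z) thus ?case using Gen_step[OF step(2)] by auto
  qed
  fix a b assume ab: "(a,b) \<in> real_circ X dm d Vs" "(b,a) \<in> real_circ X dm d Vs"
  hence "(a,b) \<in> Id_on Vs \<union> (Gen Vs)\<^sup>+" "(b,a) \<in> Id_on Vs \<union> (Gen Vs)\<^sup>+"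
    unfolding real_circ_eq LC_def using Vs_open by auto
  hence h: "a = b \<or> (a,b) \<in> (Gen Vs)\<^sup>+" "b = a \<or> (b,a) \<in> (Gen Vs)\<^sup>+" unfolding Id_on_iff by blast+
  show "a = b"
  proof (rule ccontr)
    assume ne: "a \<noteq> b"
    hence "Phi a < Phi b" "Phi b < Phi a" using h tr by metis+
    thus False by simp
  qed
qed

end

theorem mainTheorem2:
  fixes X :: "'c set" and dm :: "'c \<Rightarrow> nat" and d :: "nat \<Rightarrow> bool \<Rightarrow> 'c \<Rightarrow> 'c"
  assumes "precubical X dm d"
  shows "vortex_free (real_top X dm d) (real_circ X dm d)"
  unfolding vortex_free_def vortex_def
proof (intro ballI notI)
  interpret pcs X dm d by (unfold_locales) (rule assms)
  fix p assume "p \<in> topspace (real_top X dm d)"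
    and vt: "p \<in> topspace (real_top X dm d) \<and> (\<forall>V. openin (real_top X dm d) V \<and> p \<in> V \<longrightarrow> \<not> antisym (real_circ X dm d V))"
  hence "p \<in> real_pts X dm // real_equiv X dm d" using topspace_RT unfolding real_space_def by simp
  then obtain u where u: "u \<in> real_pts X dm" "p = real_equiv X dm d `` {u}" by (auto elim: quotientE)
  obtain c t where ct: "u = (c,t)" "c \<in> X" "t \<in> cube (dm c)" using u(1) unfolding real_pts_def by blast
  have pf: "p = real_map X dm d c t" using u(2) ct(1) unfolding real_map_def by simp
  obtain e s where es: "valid dm d c e" "cof e s = t" "\<forall>j<dm (fseq d c e). 0 < s j \<and> s j < 1"
    "\<forall>j\<ge>dm (fseq d c e). s j = 0"
    using carrier[OF ct(2,3)] by blast
  define c0 where "c0 = fseq d c e"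
  define n0 where "n0 = dm c0"
  define F where "F = insert (1/2::real) ((\<lambda>j. s j) ` {..<n0} \<union> (\<lambda>j. 1 - s j) ` {..<n0})"
  define \<epsilon> where "\<epsilon> = Min F"
  have Ff: "finite F" "F \<noteq> {}" unfolding F_def by auto
  have Fpos: "\<forall>x\<in>F. 0 < x" using es(3) unfolding F_def n0_def c0_def by auto
  have epos: "0 < \<epsilon>" using Ff Fpos unfolding \<epsilon>_def by simp
  have ehalf: "\<epsilon> \<le> 1/2" using Ff unfolding \<epsilon>_def F_def by (intro Min_le) auto
  have eint: "\<forall>j<dm c0. \<epsilon> \<le> s j \<and> s j \<le> 1 - \<epsilon>"
  proof (intro allI impI)
    fix j assume j: "j < dm c0"
    have "\<epsilon> \<le> s j" using Ff j unfolding \<epsilon>_def F_def n0_def by (intro Min_le) auto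
    moreover have "\<epsilon> \<le> 1 - s j" using Ff j unfolding \<epsilon>_def F_def n0_def by (intro Min_le) auto
    ultimately show "\<epsilon> \<le> s j \<and> s j \<le> 1 - \<epsilon>" by linarith
  qed
  have c0X: "c0 \<in> X" unfolding c0_def using fseq_in[OF ct(2) es(1)] .
  interpret st: star X dm d c0 s \<epsilon>
    using c0X eint es(4) epos ehalf unfolding c0_def by unfold_locales auto
  have "t \<in> st.Wt c" unfolding st.Wt_def using es(1,2) c0_def by blast
  moreover have "st.near c t t" unfolding st.near_def using epos by simp
  ultimately have "st.Q (c,t)" unfolding st.Q_def using ct(2,3) by auto
  hence "p \<in> st.Vs" using st.fm_Q[OF ct(2,3)] pf by blast
  thus False using vt st.Vs_open st.Vs_antisym by blast
qed



end
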